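(* Fix $X\in\mathcal{E}$ and let $I$ be the Daniell integral associated with $X$. Let $f\in\mathbb{L}$ have bounded support. Then there exists an open dense set $H\subseteq K$ such that $I(f)(\omega)=f(X(\omega))$ for every $\omega\in H$.
   Context: Let $\mathcal{E}$ be an order complete vector lattice with a weak order unit $E$, $K$ its Stone space (extremally disconnected compact Hausdorff), and $C^\infty(K)$ the vector lattice of continuous functions $K\to[-\infty,\infty]$ finite off a nowhere dense set (identified when equal off a nowhere dense set), which is the universal completion $\mathcal{E}^u$. Fix a Maeda–Ogasawara representation of $\mathcal{E}$ as an order dense ideal of $C^\infty(K)$ with $E$ corresponding to $\mathbf{1}$. For $Y\in\mathcal{E}$, $P_Y$ denotes the band projection onto the band generated by $Y$; in this representation $P_YE=\mathbf{1}_{\overline{\{Y\neq0\}}}$. Daniell calculus: $F(\mathbb{R})$ is the algebra of finite disjoint unions of intervals $(a,b]$, $(a,\infty)$, $(-\infty,b]$ ($a,b\in\mathbb{R}$), and $\mathbb{L}$ is the vector lattice of functions $f=\sum_{i=1}^n a_i\mathbf{1}_{S_i}$ with $a_i\in\mathbb{R}$ and $(S_i)$ a partition of $\mathbb{R}$ into sets of $F(\mathbb{R})$. For fixed $X\in\mathcal{E}$ the spectral system is $A_t=E-P_{(X-tE)^+}E$ ($t\in\mathbb{R}$), with $A_\infty=\sup_tA_t$, $A_{-\infty}=\inf_tA_t$; the measure $\mu_A$ is $\mu_A(a,b]=A_b-A_a$, $\mu_A(a,\infty)=A_\infty-A_a$, $\mu_A(-\infty,b]=A_b-A_{-\infty}$,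 extended additively to finite disjoint unions; and the Daniell integral associated with $X$ is $I(f)=\sum_i a_i\mu_A(S_i)$ for $f=\sum_ia_i\mathbf{1}_{S_i}\in\mathbb{L}$. *)

theory Defs
  imports "HOL-Analysis.Analysis"
begin

text \<open>K is modelled as a type of class t2_space with UNIV compact. Two continuous functions agreeing off a nowhere dense set
agree everywhere, so no quotient is needed.\<close>

definition extremally_disconnected :: "'a::topological_space itself \<Rightarrow> bool" where
  "extremally_disconnected _ \<longleftrightarrow> (\<forall>U::'a set. open U \<longrightarrow> open (closure U))"

definition Cinf :: "('a::topological_space \<Rightarrow> ereal) set" where
  "Cinf = {u. continuous_on UNIV u \<and> interior (closure {\<omega>. \<bar>u \<omega>\<bar> = \<infinity>}) = {}}"

definition cinf_add :: "('a::topological_space \<Rightarrow> ereal) \<Rightarrow> ('a \<Rightarrow> ereal) \<Rightarrow> ('a \<Rightarrow> ereal)" where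
  "cinf_add u v = (THE w. w \<in> Cinf \<and>
      (\<forall>\<omega>. \<bar>u \<omega>\<bar> \<noteq> \<infinity> \<and> \<bar>v \<omega>\<bar> \<noteq> \<infinity> \<longrightarrow> w \<omega> = u \<omega> + v \<omega>))"

definition cinf_scale :: "real \<Rightarrow> ('a \<Rightarrow> ereal) \<Rightarrow> ('a \<Rightarrow> ereal)" where
  "cinf_scale c u = (\<lambda>\<omega>. ereal c * u \<omega>)"

text \<open>A Maeda--Ogasawara representation: an order dense ideal of C^infty(K)
containing the constant function 1 (the image of the weak order unit E).\<close>

definition MO_representation :: "('a::topological_space \<Rightarrow> ereal) set \<Rightarrow> bool" where
  "MO_representation \<E> \<longleftrightarrow>
     \<E> \<subseteq> Cinf \<and> (\<lambda>_. 0) \<in> \<E> \<and>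
     (\<forall>u\<in>\<E>. \<forall>v\<in>\<E>. cinf_add u v \<in> \<E>) \<and>
     (\<forall>c. \<forall>u\<in>\<E>. cinf_scale c u \<in> \<E>) \<and>
     (\<forall>u\<in>Cinf. \<forall>v\<in>\<E>. (\<forall>\<omega>. \<bar>u \<omega>\<bar> \<le> \<bar>v \<omega>\<bar>) \<longrightarrow> u \<in> \<E>) \<and>
     (\<forall>u\<in>Cinf. (\<lambda>_. 0) < u \<longrightarrow> (\<exists>v\<in>\<E>. (\<lambda>_. 0) < v \<and> v \<le> u)) \<and>
     (\<lambda>_. 1) \<in> \<E>"

text \<open>Suprema and infima computed in the vector lattice \<E> (pointwise order
of representatives, which is the order of C^infty(K)).\<close>

definition is_sup_in :: "('a \<Rightarrow> ereal) set \<Rightarrow> ('a \<Rightarrow> ereal) set \<Rightarrow> ('a \<Rightarrow> ereal) \<Rightarrow> bool" where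
  "is_sup_in \<E> S u \<longleftrightarrow> u \<in> \<E> \<and> (\<forall>v\<in>S. v \<le> u) \<and> (\<forall>w\<in>\<E>. (\<forall>v\<in>S. v \<le> w) \<longrightarrow> u \<le> w)"

definition is_inf_in :: "('a \<Rightarrow> ereal) set \<Rightarrow> ('a \<Rightarrow> ereal) set \<Rightarrow> ('a \<Rightarrow> ereal) \<Rightarrow> bool" where
  "is_inf_in \<E> S u \<longleftrightarrow> u \<in> \<E> \<and> (\<forall>v\<in>S. u \<le> v) \<and> (\<forall>w\<in>\<E>. (\<forall>v\<in>S. w \<le> v) \<longrightarrow> w \<le> u)"

text \<open>Band projection of E onto the band generated by Y, in the representation:
P_Y E = indicator of the closure of the set where Y is nonzero.\<close>

definition bandproj_E :: "('a::topological_space \<Rightarrow> ereal) \<Rightarrow> ('a \<Rightarrow> ereal)" where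
  "bandproj_E Y = (\<lambda>\<omega>. ereal (indicator (closure {\<omega>. Y \<omega> \<noteq> 0}) \<omega>))"

definition shift_pos :: "('a \<Rightarrow> ereal) \<Rightarrow> real \<Rightarrow> ('a \<Rightarrow> ereal)" where
  "shift_pos X t = (\<lambda>\<omega>. max (X \<omega> - ereal t) 0)"

definition spec :: "('a::topological_space \<Rightarrow> ereal) \<Rightarrow> real \<Rightarrow> ('a \<Rightarrow> ereal)" where
  "spec X t = (\<lambda>\<omega>. 1 - bandproj_E (shift_pos X t) \<omega>)"

definition spec_top :: "('a::topological_space \<Rightarrow> ereal) set \<Rightarrow> ('a \<Rightarrow> ereal) \<Rightarrow> ('a \<Rightarrow> ereal)" where
  "spec_top \<E> X = (THE u. is_sup_in \<E> (range (spec X)) u)"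

definition spec_bot :: "('a::topological_space \<Rightarrow> ereal) set \<Rightarrow> ('a \<Rightarrow> ereal) \<Rightarrow> ('a \<Rightarrow> ereal)" where
  "spec_bot \<E> X = (THE u. is_inf_in \<E> (range (spec X)) u)"

datatype ivl = OC real real | Gt real | Le real

fun ivl_set :: "ivl \<Rightarrow> real set" where
  "ivl_set (OC a b) = {a<..b}"
| "ivl_set (Gt a) = {a<..}"
| "ivl_set (Le b) = {..b}"

fun ivl_valid :: "ivl \<Rightarrow> bool" where
  "ivl_valid (OC a b) = (a < b)"
| "ivl_valid (Gt a) = True"
| "ivl_valid (Le b) = True"

definition FR_decomp :: "real set \<Rightarrow> ivl list \<Rightarrow> bool" where
  "FR_decomp S js \<longleftrightarrow> (\<forall>j\<in>set js. ivl_valid j) \<and>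
     disjoint_family_on (\<lambda>k. ivl_set (js ! k)) {..<length js} \<and>
     S = (\<Union>k<length js. ivl_set (js ! k))"

definition FR :: "real set set" where
  "FR = {S. \<exists>js. FR_decomp S js}"

fun mu_ivl :: "('a::topological_space \<Rightarrow> ereal) set \<Rightarrow> ('a \<Rightarrow> ereal) \<Rightarrow> ivl \<Rightarrow> ('a \<Rightarrow> ereal)" where
  "mu_ivl \<E> X (OC a b) = (\<lambda>\<omega>. spec X b \<omega> - spec X a \<omega>)"
| "mu_ivl \<E> X (Gt a) = (\<lambda>\<omega>. spec_top \<E> X \<omega> - spec X a \<omega>)"
| "mu_ivl \<E> X (Le b) = (\<lambda>\<omega>. spec X b \<omega> - spec_bot \<E> X \<omega>)"

definition muA :: "('a::topological_space \<Rightarrow> ereal) set \<Rightarrow> ('a \<Rightarrow> ereal) \<Rightarrow> real set \<Rightarrow> ('a \<Rightarrow> ereal)" where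
  "muA \<E> X S = (let js = (SOME js. FR_decomp S js) in
      (\<lambda>\<omega>. \<Sum>k<length js. mu_ivl \<E> X (js ! k) \<omega>))"

definition L_repr :: "(real \<Rightarrow> real) \<Rightarrow> nat \<Rightarrow> (nat \<Rightarrow> real) \<Rightarrow> (nat \<Rightarrow> real set) \<Rightarrow> bool" where
  "L_repr f n a S \<longleftrightarrow> (\<forall>i<n. S i \<in> FR) \<and> disjoint_family_on S {..<n} \<and>
     (\<Union>i<n. S i) = UNIV \<and> f = (\<lambda>x. \<Sum>i<n. a i * indicator (S i) x)"

definition Lspace :: "(real \<Rightarrow> real) set" where
  "Lspace = {f. \<exists>n a S. L_repr f n a S}"

definition daniell_I :: "('a::topological_space \<Rightarrow> ereal) set \<Rightarrow> ('a \<Rightarrow> ereal) \<Rightarrow> (real \<Rightarrow> real) \<Rightarrow> ('a \<Rightarrow> ereal)" where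
  "daniell_I \<E> X f = (case (SOME (n, a, S). L_repr f n a S) of (n, a, S) \<Rightarrow>
      (\<lambda>\<omega>. \<Sum>i<n. ereal (a i) * muA \<E> X (S i) \<omega>))"

end

theory Submission
  imports Defs
begin

fun ends :: "ivl \<Rightarrow> real set" where
  "ends (OC a b) = {a, b}"
| "ends (Gt a) = {a}"
| "ends (Le b) = {b}"

lemma finite_ends: "finite (ends j)"
  by (cases j) auto

lemma dense_inter:
  fixes G :: "real \<Rightarrow> 'a::topological_space set"
  assumes "finite T" "open B" "closure B = UNIV"
    and "\<And>t. open (G t)" "\<And>t. closure (G t) = UNIV"
  shows "closure (B \<inter> (\<Inter>t\<in>T. G t)) = UNIV"
  using assms(1)
proof (induction T rule: finite_induct)
  case empty then show ?case using assms by simp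
next
  case (insert t T)
  have "G t \<inter> closure (B \<inter> (\<Inter>t\<in>T. G t)) \<subseteq> closure (G t \<inter> (B \<inter> (\<Inter>t\<in>T. G t)))"
    by (rule open_Int_closure_subset[OF assms(4)])
  then have "G t \<subseteq> closure (B \<inter> (\<Inter>t\<in>insert t T. G t))"
    using insert.IH by (simp add: Int_ac)
  then have "closure (G t) \<subseteq> closure (B \<inter> (\<Inter>t\<in>insert t T. G t))"
    by (simp add: closure_minimal)
  then show ?case using assms(5) by auto
qed

lemma boundary_dense:
  fixes U :: "'a::topological_space set"
  shows "closure (U \<union> - closure U) = UNIV"
proof -
  have "closure (- closure U) = - interior (closure U)" by (rule closure_complement)
  moreover have "interior (closure U) \<subseteq> closure U" by (rule interior_subset)
  ultimately have "- closure U \<subseteq> closure (- closure U)" by auto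
  then have "closure U \<union> - closure U \<subseteq> closure (U \<union> - closure U)"
    by (metis closure_Un sup_mono order_refl)
  then show ?thesis by auto
qed

lemma shift_pos_set: "{\<omega>. shift_pos X t \<omega> \<noteq> 0} = {\<omega>. ereal t < X \<omega>}"
proof -
  have "\<And>y. (max (y - ereal t) 0 \<noteq> 0) = (ereal t < y)"
    subgoal for y by (cases y) (auto simp: max_def)
    done
  then show ?thesis unfolding shift_pos_def by auto
qed

theorem mainTheorem4:
  fixes \<E> :: "('a::t2_space \<Rightarrow> ereal) set"
    and X :: "'a \<Rightarrow> ereal"
    and f :: "real \<Rightarrow> real"
  assumes "compact (UNIV :: 'a set)"
    and "extremally_disconnected TYPE('a)"
    and "MO_representation \<E>"
    and "X \<in> \<E>"
    and "f \<in> Lspace"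
    and "bounded {x. f x \<noteq> 0}"
  shows "\<exists>H :: 'a set. open H \<and> closure H = UNIV \<and>
           (\<forall>\<omega>\<in>H. \<bar>X \<omega>\<bar> \<noteq> \<infinity> \<and>
                   daniell_I \<E> X f \<omega> = ereal (f (real_of_ereal (X \<omega>))))"
proof -
  have XC: "X \<in> Cinf" using assms(3,4) unfolding MO_representation_def by auto
  then have contX: "continuous_on UNIV X" and nwd: "interior (closure {\<omega>. \<bar>X \<omega>\<bar> = \<infinity>}) = {}"
    unfolding Cinf_def by auto
  have ex: "\<exists>p. (\<lambda>(n,a,S). L_repr f n a S) p" using assms(5) unfolding Lspace_def by auto
  define p where "p = (SOME (n,a,S). L_repr f n a S)"
  have pp: "(\<lambda>(n,a,S). L_repr f n a S) p" unfolding p_def by (rule someI_ex[OF ex])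
  obtain n a S where pe: "p = (n,a,S)" by (cases p)
  have rep: "L_repr f n a S" using pp pe by simp
  have dan: "daniell_I \<E> X f = (\<lambda>\<omega>. \<Sum>i<n. ereal (a i) * muA \<E> X (S i) \<omega>)"
    unfolding daniell_I_def p_def[symmetric] pe by simp
  have SFR: "\<And>i. i < n \<Longrightarrow> S i \<in> FR" and Sdisj: "disjoint_family_on S {..<n}"
    and Sun: "(\<Union>i<n. S i) = UNIV" and feq: "f = (\<lambda>x. \<Sum>i<n. a i * indicator (S i) x)"
    using rep unfolding L_repr_def by auto
  define J where "J i = (SOME js. FR_decomp (S i) js)" for i
  have Jd: "FR_decomp (S i) (J i)" if "i < n" for i
    using SFR[OF that] unfolding FR_def J_def by (auto intro: someI_ex)
  have muA_eq: "muA \<E> X (S i) = (\<lambda>\<omega>. \<Sum>k<length (J i). mu_ivl \<E> X (J i ! k) \<omega>)" for i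
    unfolding muA_def J_def Let_def by simp
  define T where "T = (\<Union>i<n. \<Union>k<length (J i). ends (J i ! k))"
  have finT: "finite T" unfolding T_def by (auto simp: finite_ends)
  define U where "U t = {\<omega>. ereal t < X \<omega>}" for t
  define G where "G t = U t \<union> - closure (U t)" for t
  define F where "F = {\<omega>. \<bar>X \<omega>\<bar> = \<infinity>}"
  define H where "H = (- closure F) \<inter> (\<Inter>t\<in>T. G t)"
  have openU: "open (U t)" for t
    unfolding U_def by (rule open_Collect_less[OF continuous_on_const contX])
  have openG: "open (G t)" for t unfolding G_def using openU by auto
  have denseG: "closure (G t) = UNIV" for t unfolding G_def by (rule boundary_dense)
  have denseB: "closure (- closure F) = UNIV"
    using nwd unfolding F_def by (simp add: closure_complement)
  have oH: "open H" unfolding H_def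
    by (rule open_Int[OF open_Compl[OF closed_closure] open_INT[OF finT]]) (simp add: openG)
  have cH: "closure H = UNIV" unfolding H_def
    by (rule dense_inter[OF finT open_Compl[OF closed_closure] denseB openG denseG])
  have vH: "\<bar>X \<omega>\<bar> \<noteq> \<infinity> \<and> daniell_I \<E> X f \<omega> = ereal (f (real_of_ereal (X \<omega>)))"
    if wH: "\<omega> \<in> H" for \<omega>
  proof -
    have wH1: "\<omega> \<notin> closure F" and wH2: "\<And>t. t \<in> T \<Longrightarrow> \<omega> \<in> G t"
      using wH unfolding H_def by blast+
    have "\<omega> \<notin> F" using wH1 closure_subset[of F] by blast
    then have fin: "\<bar>X \<omega>\<bar> \<noteq> \<infinity>" unfolding F_def by simp
    define x where "x = real_of_ereal (X \<omega>)"
    have Xx: "X \<omega> = ereal x" using fin unfolding x_def by (cases "X \<omega>") simp_all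
    have spec_val: "spec X t \<omega> = (if t < x then 0 else 1)" if "t \<in> T" for t
    proof -
      have wG: "\<omega> \<in> G t" using wH2 that by blast
      have "indicator (closure (U t)) \<omega> = (if t < x then 1 else (0::real))"
      proof (cases "t < x")
        case True
        then have "\<omega> \<in> U t" unfolding U_def using Xx by simp
        then show ?thesis using True closure_subset[of "U t"] by auto
      next
        case False
        then have "\<omega> \<notin> U t" unfolding U_def using Xx by simp
        then show ?thesis using False wG unfolding G_def by auto
      qed
      then show ?thesis
        unfolding spec_def bandproj_E_def shift_pos_set U_def[symmetric] by (simp add: one_ereal_def)
    qed
    have hterm: "ereal (a i) * muA \<E> X (S i) \<omega> = ereal (a i * indicator (S i) x)" if i: "i < n" for i
    proof (cases "a i = 0")
      case True then show ?thesis by (simp add: zero_ereal_def[symmetric])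
    next
      case False
      have fS: "f y = a i" if "y \<in> S i" for y
      proof -
        have "f y = (\<Sum>j<n. a j * indicator (S j) y)" using feq by simp
        also have "\<dots> = a i * indicator (S i) y"
        proof -
          have "(\<Sum>j<n. a j * indicator (S j) y) = a i * indicator (S i) y + (\<Sum>j\<in>{..<n}-{i}. a j * indicator (S j) y)"
            using i sum.remove[OF finite_lessThan[of n], of i "\<lambda>j. a j * indicator (S j) y"] by (simp only: lessThan_iff)
          moreover have "(\<Sum>j\<in>{..<n}-{i}. a j * indicator (S j) y) = 0"
          proof (rule sum.neutral, rule ballI)
            fix j assume j: "j \<in> {..<n}-{i}"
            then have "S j \<inter> S i = {}" using Sdisj i unfolding disjoint_family_on_def by auto
            then show "a j * indicator (S j) y = 0" using that by (auto simp: indicator_def)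
          qed
          ultimately show ?thesis by simp
        qed
        finally show ?thesis using that by simp
      qed
      have Sb: "bounded (S i)" using fS False by (auto intro: bounded_subset[OF assms(6)])
      then obtain B where B: "\<And>y. y \<in> S i \<Longrightarrow> \<bar>y\<bar> \<le> B" unfolding bounded_real by auto
      have Jd': "\<forall>j\<in>set (J i). ivl_valid j" "disjoint_family_on (\<lambda>k. ivl_set (J i ! k)) {..<length (J i)}"
        "S i = (\<Union>k<length (J i). ivl_set (J i ! k))"
        using Jd[OF i] unfolding FR_decomp_def by auto
      have mk: "mu_ivl \<E> X (J i ! k) \<omega> = ereal (indicator (ivl_set (J i ! k)) x)" if k: "k < length (J i)" for k
      proof -
        have sub: "ivl_set (J i ! k) \<subseteq> S i" using Jd'(3) k by auto
        have eT: "ends (J i ! k) \<subseteq> T" unfolding T_def using i k by auto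
        have val: "ivl_valid (J i ! k)" using Jd'(1) k by auto
        show ?thesis
        proof (cases "J i ! k")
          case (OC c d)
          then have "c < d" "c \<in> T" "d \<in> T" using val eT by auto
          then show ?thesis using OC spec_val by (auto simp: indicator_def)
        next
          case (Gt c)
          have "max c B + 1 \<in> S i" using sub Gt by auto
          then have False using B[of "max c B + 1"] by auto
          then show ?thesis ..
        next
          case (Le c)
          have "min c (-B) - 1 \<in> S i" using sub Le by auto
          then have False using B[of "min c (-B) - 1"] by auto
          then show ?thesis ..
        qed
      qed
      have "muA \<E> X (S i) \<omega> = (\<Sum>k<length (J i). ereal (indicator (ivl_set (J i ! k)) x))"
        unfolding muA_eq using mk by simp
      also have "\<dots> = ereal (indicator (S i) x)"
        proof -
        have ind: "(indicator (\<Union>k<length (J i). ivl_set (J i ! k)) x :: real) = (\<Sum>k<length (J i). indicator (ivl_set (J i ! k)) x)"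
          by (rule indicator_UN_disjoint[OF finite_lessThan Jd'(2)])
        show ?thesis by (subst sum_ereal, subst Jd'(3), simp only: ind)
      qed
      finally show ?thesis by simp
    qed
    have "daniell_I \<E> X f \<omega> = (\<Sum>i<n. ereal (a i * indicator (S i) x))"
      unfolding dan using hterm by simp
    also have "\<dots> = ereal (f x)" using feq by simp
    finally show ?thesis using fin x_def by simp
  qed
  have allH: "\<forall>\<omega>\<in>H. \<bar>X \<omega>\<bar> \<noteq> \<infinity> \<and> daniell_I \<E> X f \<omega> = ereal (f (real_of_ereal (X \<omega>)))"
    by (intro ballI) (erule vH)
  show ?thesis by (intro exI[of _ H] conjI oH cH allH)
qed

end
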